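(* Let $A\in\mathrm{Sym}(\mathbb R^{n+1})$ with $\vec a_0\ne 0$, and let $B=I_n+\sqrt{-1}A$ (which is invertible). Then $\mathrm{Re}(B^{-1})$ is positive semidefinite with exactly one zero eigenvalue, and its null space is spanned by the first column $(a_{00},a_{01},\dots,a_{0n})^T$ of $A$.
   Context: $I_n=\mathrm{diag}(0,1,\dots,1)\in\mathrm{Sym}(\mathbb R^{n+1})$. For $A=[a_{ij}]_{i,j=0}^n$, $\vec a_0=(a_{01},\dots,a_{0n})$. For a complex matrix $M$, $\mathrm{Re}\,M$ denotes the entrywise real part. *)

theory Defs
  imports Jordan_Normal_Form.Matrix_Kernel Jordan_Normal_Form.Char_Poly
begin

text \<open>Matrices are indexed by 0..n, i.e. they are (n+1) x (n+1) JNF matrices.\<close>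

text \<open>I_n = diag(0,1,...,1) of size n+1.\<close>
definition I_mat :: "nat \<Rightarrow> real mat" where
  "I_mat n = mat (n+1) (n+1) (\<lambda>(i,j). if i = j \<and> i \<noteq> 0 then 1 else 0)"

definition B_mat :: "nat \<Rightarrow> real mat \<Rightarrow> complex mat" where
  "B_mat n A = map_mat complex_of_real (I_mat n) + \<i> \<cdot>\<^sub>m map_mat complex_of_real A"

definition Re_mat :: "complex mat \<Rightarrow> real mat" where
  "Re_mat M = map_mat Re M"

definition psd_mat :: "nat \<Rightarrow> real mat \<Rightarrow> bool" where
  "psd_mat m M \<longleftrightarrow> M \<in> carrier_mat m m \<and> transpose_mat M = M \<and>
     (\<forall>x \<in> carrier_vec m. 0 \<le> x \<bullet> (M *\<^sub>v x))"

end

theory Submission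
  imports Defs Jordan_Normal_Form.Jordan_Normal_Form_Existence Jordan_Normal_Form.Jordan_Normal_Form_Uniqueness
begin


lemma core:
  fixes A :: "real mat" and u v x :: "nat \<Rightarrow> real" and N :: nat
  assumes sym: "\<And>i j. i<N \<Longrightarrow> j<N \<Longrightarrow> A$$(i,j) = A$$(j,i)"
  and h1: "\<And>i. i<N \<Longrightarrow> x i = (if i=0 then 0 else u i) - (\<Sum>j<N. A$$(i,j) * v j)"
  and h2: "\<And>i. i<N \<Longrightarrow> (if i=0 then 0 else v i) + (\<Sum>j<N. A$$(i,j) * u j) = 0"
  shows "(\<Sum>i<N. x i * u i) = (\<Sum>i<N. if i=0 then 0 else u i^2 + v i^2)"
proof -
  have S: "(\<Sum>i<N. (\<Sum>j<N. A$$(i,j) * v j) * u i) = - (\<Sum>j<N. if j=0 then 0 else v j^2)"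
  proof -
    have "(\<Sum>i<N. (\<Sum>j<N. A$$(i,j) * v j) * u i) = (\<Sum>i<N. \<Sum>j<N. v j * (A$$(i,j) * u i))"
      by (simp add: sum_distrib_left sum_distrib_right mult_ac)
    also have "\<dots> = (\<Sum>j<N. \<Sum>i<N. v j * (A$$(i,j) * u i))" by (rule sum.swap)
    also have "\<dots> = (\<Sum>j<N. v j * (\<Sum>i<N. A$$(j,i) * u i))"
      by (simp add: sum_distrib_left sym)
    also have "\<dots> = (\<Sum>j<N. v j * (- (if j=0 then 0 else v j)))"
      by (rule sum.cong, simp, metis h2 add_eq_0_iff lessThan_iff)
    also have "\<dots> = - (\<Sum>j<N. if j=0 then 0 else v j^2)"
      by (simp add: sum_negf[symmetric] power2_eq_square if_distrib cong: if_cong)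
    finally show ?thesis .
  qed
  have "(\<Sum>i<N. x i * u i) = (\<Sum>i<N. (if i=0 then 0 else u i) * u i - (\<Sum>j<N. A$$(i,j) * v j) * u i)"
    by (rule sum.cong, simp, simp add: h1 left_diff_distrib)
  also have "\<dots> = (\<Sum>i<N. (if i=0 then 0 else u i^2)) + (\<Sum>j<N. if j=0 then 0 else v j^2)"
  proof -
    have "(\<Sum>i<N. (if i=0 then 0 else u i) * u i) = (\<Sum>i<N. (if i=0 then 0 else u i^2))"
      by (rule sum.cong, auto simp: power2_eq_square)
    then show ?thesis unfolding sum_subtractf S by simp
  qed
  also have "\<dots> = (\<Sum>i<N. if i=0 then 0 else u i^2 + v i^2)"
    unfolding sum.distrib[symmetric] by (rule sum.cong, auto)
  finally show ?thesis .
qed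



lemma B_index:
  assumes A: "A \<in> carrier_mat (n+1) (n+1)" and i: "i < n+1" and j: "j < n+1"
  shows "B_mat n A $$ (i,j) = (if i=j \<and> i\<noteq>0 then 1 else 0) + \<i> * complex_of_real (A$$(i,j))"
  using A i j by (simp add: B_mat_def I_mat_def)

lemma B_carrier: "A \<in> carrier_mat (n+1) (n+1) \<Longrightarrow> B_mat n A \<in> carrier_mat (n+1) (n+1)"
  by (simp add: B_mat_def I_mat_def)

lemma sum_delta_if: "i < (N::nat) \<Longrightarrow> (\<Sum>j<N. (if i=j \<and> i\<noteq>0 then f j else 0)) = (if i=0 then 0 else (f i :: 'a::comm_monoid_add))"
proof (cases "i=0")
  case False
  assume i: "i < N"
  have "(\<Sum>j<N. (if i=j \<and> i\<noteq>0 then f j else 0)) = (\<Sum>j<N. if j = i then f j else 0)"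
    using False by (intro sum.cong) auto
  also have "\<dots> = f i" using i by (subst sum.delta) (auto intro: finite_lessThan)
  finally show ?thesis using False by simp
qed simp

lemma B_apply:
  assumes A: "A \<in> carrier_mat (n+1) (n+1)" and w: "w \<in> carrier_vec (n+1)" and i: "i < n+1"
  shows "Re ((B_mat n A *\<^sub>v w) $ i) = (if i=0 then 0 else Re (w$i)) - (\<Sum>j<n+1. A$$(i,j) * Im (w$j))"
    and "Im ((B_mat n A *\<^sub>v w) $ i) = (if i=0 then 0 else Im (w$i)) + (\<Sum>j<n+1. A$$(i,j) * Re (w$j))"
proof -
  have e: "(B_mat n A *\<^sub>v w) $ i = (if i=0 then 0 else w$i) + (\<Sum>j<n+1. \<i> * complex_of_real (A$$(i,j)) * w$j)"
  proof -
    have "(B_mat n A *\<^sub>v w) $ i = (\<Sum>j\<in>{0..<n+1}. B_mat n A $$ (i,j) * w$j)"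
      using B_carrier[OF A] w i by (simp add: scalar_prod_def)
    also have "\<dots> = (\<Sum>j<n+1. (if i=j \<and> i\<noteq>0 then w$j else 0) + \<i> * complex_of_real (A$$(i,j)) * w$j)"
    proof (rule sum.cong)
      fix j assume "j \<in> {..<n+1}"
      then show "B_mat n A $$ (i,j) * w$j = (if i=j \<and> i\<noteq>0 then w$j else 0) + \<i> * complex_of_real (A$$(i,j)) * w$j"
        using B_index[OF A i, of j] by (auto simp: distrib_right)
    qed (auto simp: atLeast0LessThan)
    also have "\<dots> = (if i=0 then 0 else w$i) + (\<Sum>j<n+1. \<i> * complex_of_real (A$$(i,j)) * w$j)"
      unfolding sum.distrib using sum_delta_if[OF i, of "\<lambda>j. w$j"] by simp
    finally show ?thesis .
  qed
  show "Re ((B_mat n A *\<^sub>v w) $ i) = (if i=0 then 0 else Re (w$i)) - (\<Sum>j<n+1. A$$(i,j) * Im (w$j))"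
    unfolding e Re_sum by (simp add: sum_negf)
  show "Im ((B_mat n A *\<^sub>v w) $ i) = (if i=0 then 0 else Im (w$i)) + (\<Sum>j<n+1. A$$(i,j) * Re (w$j))"
    unfolding e Im_sum by simp
qed

lemma Re_apply:
  assumes C: "C \<in> carrier_mat N N" and x: "x \<in> carrier_vec N"
  shows "Re_mat C *\<^sub>v x = map_vec Re (C *\<^sub>v map_vec complex_of_real x)"
  using C x by (intro eq_vecI) (auto simp: Re_mat_def scalar_prod_def Re_sum)

lemma M_apply:
  assumes R: "R \<in> carrier_mat N N" and z: "z \<in> carrier_vec N"
  shows "map_vec Re (map_mat complex_of_real R *\<^sub>v z) = R *\<^sub>v map_vec Re z"
    and "map_vec Im (map_mat complex_of_real R *\<^sub>v z) = R *\<^sub>v map_vec Im z"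
  using R z by (auto intro!: eq_vecI simp: scalar_prod_def Re_sum Im_sum)

lemma self_scalar_zero:
  fixes y :: "real vec"
  assumes "y \<in> carrier_vec N" "y \<bullet> y = 0"
  shows "y = 0\<^sub>v N"
proof (intro eq_vecI)
  fix i assume i: "i < dim_vec (0\<^sub>v N :: real vec)"
  have "(\<Sum>j\<in>{0..<N}. y$j * y$j) = 0" using assms by (simp add: scalar_prod_def)
  then have "\<forall>j\<in>{0..<N}. y$j * y$j = 0" by (subst (asm) sum_nonneg_eq_0_iff) auto
  then show "y $ i = 0\<^sub>v N $ i" using i by auto
qed (use assms in auto)




lemma map_Re_zero[simp]: "map_vec Re (0\<^sub>v N) = 0\<^sub>v N" by (intro eq_vecI) auto
lemma map_Im_zero[simp]: "map_vec Im (0\<^sub>v N) = 0\<^sub>v N" by (intro eq_vecI) auto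

lemma sum_only0:
  assumes "\<And>j. j < N \<Longrightarrow> j \<noteq> 0 \<Longrightarrow> g j = 0" "0 < (N::nat)"
  shows "(\<Sum>j<N. f j * (g j::real)) = f 0 * g 0"
proof -
  have "(\<Sum>j<N. f j * g j) = (\<Sum>j<N. if j = 0 then f 0 * g 0 else 0)"
    using assms by (intro sum.cong) auto
  also have "\<dots> = f 0 * g 0" using assms(2) by (subst sum.delta) (auto intro: finite_lessThan)
  finally show ?thesis .
qed

lemma min12:
  assumes "\<forall>x\<in>set L. (0::nat) < x" "sum_list (map (min 1) L) = sum_list (map (min 2) L)"
  shows "sum_list L = sum_list (map (min 1) L)"
  using assms
proof (induct L)
  case (Cons a L)
  have le: "sum_list (map (min 1) L) \<le> sum_list (map (min 2) L)"
    by (induct L) (auto intro: add_mono)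
  from Cons.prems have "min 1 a + sum_list (map (min 1) L) = min 2 a + sum_list (map (min 2) L)" by simp
  with le have "min 1 a = min (2::nat) a" "sum_list (map (min 1) L) = sum_list (map (min 2) L)" by linarith+
  with Cons show ?case by auto
qed simp

lemma oh_order: "order 0 (map_poly (of_real :: real \<Rightarrow> complex) p) = order 0 p"
proof -
  interpret oh: map_poly_inj_idom_divide_hom "of_real :: real \<Rightarrow> complex" ..
  show ?thesis using oh.order_hom[of 0 p] by simp
qed

lemma kernel_dim_cong: "mat_kernel X = mat_kernel Y \<Longrightarrow> dim_col X = dim_col Y \<Longrightarrow> kernel_dim X = kernel_dim Y"
  unfolding kernel_dim_def by simp




theorem lemma4p3:
  fixes n :: nat and A :: "real mat"
  assumes "A \<in> carrier_mat (n+1) (n+1)"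
    and "transpose_mat A = A"
    and "\<exists>j\<in>{1..n}. A $$ (0, j) \<noteq> 0"
  shows "invertible_mat (B_mat n A) \<and>
    (\<forall>C \<in> carrier_mat (n+1) (n+1).
       inverts_mat (B_mat n A) C \<and> inverts_mat C (B_mat n A) \<longrightarrow>
       psd_mat (n+1) (Re_mat C) \<and>
       order 0 (char_poly (Re_mat C)) = 1 \<and>
       mat_kernel (Re_mat C) = {c \<cdot>\<^sub>v col A 0 | c. True})"
proof -
  note A = assms(1)
  let ?B = "B_mat n A"
  have sym: "\<And>i j. i<n+1 \<Longrightarrow> j<n+1 \<Longrightarrow> A$$(i,j) = A$$(j,i)"
    using assms(2) A by (metis carrier_matD index_transpose_mat(1))
  obtain j0 where j0: "j0 \<in> {1..n}" "A$$(0,j0) \<noteq> 0" using assms(3) by blast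
  hence j0N: "j0 < n+1" "j0 \<noteq> 0" and Aj0: "A$$(j0,0) \<noteq> 0" using sym[of 0 j0] by auto
  have Bc: "?B \<in> carrier_mat (n+1) (n+1)" by (rule B_carrier[OF A])
  have key: "(\<forall>i<n+1. x$i = (if i=0 then 0 else Re(w$i)) - (\<Sum>j<n+1. A$$(i,j)*Im(w$j))) \<and>
     (\<forall>i<n+1. (if i=0 then 0 else Im(w$i)) + (\<Sum>j<n+1. A$$(i,j)*Re(w$j)) = 0) \<and>
     (\<Sum>i<n+1. x$i * Re(w$i)) = (\<Sum>i<n+1. if i=0 then 0 else Re(w$i)^2 + Im(w$i)^2)"
    if w: "w \<in> carrier_vec (n+1)" and x: "x \<in> carrier_vec (n+1)"
      and e: "?B *\<^sub>v w = map_vec complex_of_real x" for w x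
  proof -
    have h1: "\<forall>i<n+1. x$i = (if i=0 then 0 else Re(w$i)) - (\<Sum>j<n+1. A$$(i,j)*Im(w$j))"
    proof (intro allI impI)
      fix i assume i: "i < n+1"
      have "Re ((?B *\<^sub>v w) $ i) = x$i" using e i x by simp
      then show "x$i = (if i=0 then 0 else Re(w$i)) - (\<Sum>j<n+1. A$$(i,j)*Im(w$j))"
        using B_apply(1)[OF A w i] by simp
    qed
    have h2: "\<forall>i<n+1. (if i=0 then 0 else Im(w$i)) + (\<Sum>j<n+1. A$$(i,j)*Re(w$j)) = 0"
    proof (intro allI impI)
      fix i assume i: "i < n+1"
      have "Im ((?B *\<^sub>v w) $ i) = 0" using e i x by simp
      then show "(if i=0 then 0 else Im(w$i)) + (\<Sum>j<n+1. A$$(i,j)*Re(w$j)) = 0"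
        using B_apply(2)[OF A w i] by simp
    qed
    have "(\<Sum>i<n+1. x$i * Re(w$i)) = (\<Sum>i<n+1. if i=0 then 0 else Re(w$i)^2 + Im(w$i)^2)"
      by (rule core[of "n+1" A "\<lambda>i. x$i" "\<lambda>i. Re(w$i)" "\<lambda>i. Im(w$i)"])
         (use sym h1 h2 in auto)
    with h1 h2 show ?thesis by blast
  qed
  have inj: "w = 0\<^sub>v (n+1)" if w: "w \<in> carrier_vec (n+1)" and e: "?B *\<^sub>v w = 0\<^sub>v (n+1)" for w
  proof -
    have e': "?B *\<^sub>v w = map_vec complex_of_real (0\<^sub>v (n+1))" using e by auto
    note k = key[OF w zero_carrier_vec e']
    have "(\<Sum>i<n+1. if i=0 then 0 else Re(w$i)^2 + Im(w$i)^2) = 0" using k by simp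
    then have z: "\<forall>i\<in>{..<n+1}. (if i=0 then 0 else Re(w$i)^2 + Im(w$i)^2) = 0"
      by (subst (asm) sum_nonneg_eq_0_iff) auto
    have reim: "Re (w$i) = 0 \<and> Im (w$i) = 0" if "i < n+1" "i \<noteq> 0" for i
    proof -
      have "(if i=0 then 0 else Re(w$i)^2 + Im(w$i)^2) = 0" using z that by blast
      with that have "Re(w$i)^2 + Im(w$i)^2 = 0" by simp
      then show ?thesis by (simp add: sum_power2_eq_zero_iff)
    qed
    have "(\<Sum>j<n+1. A$$(j0,j)*Re(w$j)) = A$$(j0,0) * Re(w$0)"
      by (rule sum_only0) (use reim in auto)
    with k j0N have "A$$(j0,0) * Re(w$0) = 0" using reim[OF j0N] by auto
    with Aj0 have r0: "Re (w$0) = 0" by simp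
    have "(\<Sum>j<n+1. A$$(j0,j)*Im(w$j)) = A$$(j0,0) * Im(w$0)"
      by (rule sum_only0) (use reim in auto)
    with k j0N have "A$$(j0,0) * Im(w$0) = 0" using reim[OF j0N] by auto
    with Aj0 have i0: "Im (w$0) = 0" by simp
    show ?thesis
    proof (intro eq_vecI)
      fix i assume i: "i < dim_vec (0\<^sub>v (n+1) :: complex vec)"
      then show "w $ i = 0\<^sub>v (n+1) $ i" using reim[of i] r0 i0 by (cases "i=0") (auto intro: complex_eqI)
    qed (use w in auto)
  qed
  have "det ?B \<noteq> 0" using inj det_0_iff_vec_prod_zero[OF Bc] by blast
  from det_non_zero_imp_unit[OF Bc this, of "()"]
  obtain D where D: "D \<in> carrier_mat (n+1) (n+1)" "D * ?B = 1\<^sub>m (n+1)" "?B * D = 1\<^sub>m (n+1)"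
    by (auto simp: Units_def ring_mat_def)
  have inv: "invertible_mat ?B" unfolding invertible_mat_def inverts_mat_def
    using D Bc by (auto simp: square_mat.simps)
  have part2: "psd_mat (n+1) (Re_mat C) \<and> order 0 (char_poly (Re_mat C)) = 1 \<and>
       mat_kernel (Re_mat C) = {c \<cdot>\<^sub>v col A 0 | c. True}"
    if C: "C \<in> carrier_mat (n+1) (n+1)" and ic: "inverts_mat ?B C \<and> inverts_mat C ?B" for C
  proof -
    let ?R = "Re_mat C"
    have BC: "?B * C = 1\<^sub>m (n+1)" and CB: "C * ?B = 1\<^sub>m (n+1)"
      using ic Bc C by (auto simp: inverts_mat_def)
    have Rc: "?R \<in> carrier_mat (n+1) (n+1)" using C by (simp add: Re_mat_def)
    have wB: "?B *\<^sub>v (C *\<^sub>v map_vec complex_of_real x) = map_vec complex_of_real x"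
      if "x \<in> carrier_vec (n+1)" for x
      using that BC Bc C by (simp add: assoc_mult_mat_vec[symmetric])
    have wc: "C *\<^sub>v map_vec complex_of_real x \<in> carrier_vec (n+1)" for x using C unfolding carrier_vec_def by simp
    have Rx: "?R *\<^sub>v x = map_vec Re (C *\<^sub>v map_vec complex_of_real x)"
      if "x \<in> carrier_vec (n+1)" for x using Re_apply[OF C that] .
    have tB: "transpose_mat ?B = ?B"
      using Bc by (intro eq_matI) (auto simp: B_index[OF A] sym)
    have tCB: "transpose_mat C * ?B = 1\<^sub>m (n+1)"
      using arg_cong[OF BC, of transpose_mat] transpose_mult[OF Bc C] tB by simp
    have tC: "transpose_mat C = C"
    proof -
      have "transpose_mat C = transpose_mat C * (?B * C)" using BC C by simp
      also have "\<dots> = (transpose_mat C * ?B) * C" using C Bc by (simp add: assoc_mult_mat)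
      also have "\<dots> = C" using tCB C by simp
      finally show ?thesis .
    qed
    have tR: "transpose_mat ?R = ?R"
    proof -
      have "transpose_mat ?R = map_mat Re (transpose_mat C)"
        by (intro eq_matI) (simp_all add: Re_mat_def)
      then show ?thesis using tC by (simp add: Re_mat_def)
    qed
    have dw: "dim_vec (C *\<^sub>v map_vec complex_of_real x) = n+1" for x using C by simp
    have psd: "psd_mat (n+1) ?R"
      unfolding psd_mat_def
    proof (intro conjI ballI)
      fix x :: "real vec" assume x: "x \<in> carrier_vec (n+1)"
      let ?w = "C *\<^sub>v map_vec complex_of_real x"
      note k = key[OF wc x wB[OF x]]
      have "x \<bullet> (?R *\<^sub>v x) = (\<Sum>i<n+1. x$i * Re(?w$i))"
        unfolding Rx[OF x] using x dw[of x] by (simp add: scalar_prod_def lessThan_atLeast0)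
      also have "\<dots> = (\<Sum>i<n+1. if i=0 then 0 else Re(?w$i)^2 + Im(?w$i)^2)" using k by blast
      also have "\<dots> \<ge> 0" by (intro sum_nonneg) auto
      finally show "0 \<le> x \<bullet> (?R *\<^sub>v x)" .
    qed (use Rc tR in auto)
    have colc: "col A 0 \<in> carrier_vec (n+1)" using A unfolding carrier_vec_def by simp
    have ker: "mat_kernel ?R = {c \<cdot>\<^sub>v col A 0 | c. True}"
    proof (intro equalityI subsetI)
      fix x assume "x \<in> mat_kernel ?R"
      then have x: "x \<in> carrier_vec (n+1)" and Rx0: "?R *\<^sub>v x = 0\<^sub>v (n+1)"
        using Rc by (auto simp: mat_kernel_def)
      let ?w = "C *\<^sub>v map_vec complex_of_real x"
      note k = key[OF wc x wB[OF x]]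
      have re0: "Re (?w$i) = 0" if "i < n+1" for i
      proof -
        have "map_vec Re ?w $ i = 0\<^sub>v (n+1) $ i" using Rx0 Rx[OF x] by simp
        then show ?thesis using that dw[of x] by simp
      qed
      have im0: "Im (?w$i) = 0" if "i < n+1" "i \<noteq> 0" for i
      proof -
        have s: "(\<Sum>j<n+1. A$$(i,j)*Re(?w$j)) = 0" by (intro sum.neutral) (auto simp: re0)
        have h: "(if i=0 then 0 else Im(?w$i)) + (\<Sum>j<n+1. A$$(i,j)*Re(?w$j)) = 0"
          using k that(1) by blast
        have "(if i=0 then 0 else Im(?w$i)) = Im(?w$i)" using that(2) by simp
        with h s show ?thesis by linarith
      qed
      have "x = (- Im (?w$0)) \<cdot>\<^sub>v col A 0"
      proof (intro eq_vecI)
        fix i assume "i < dim_vec ((- Im (?w$0)) \<cdot>\<^sub>v col A 0)"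
        then have i: "i < n+1" using A by simp
        have "(\<Sum>j<n+1. A$$(i,j)*Im(?w$j)) = A$$(i,0) * Im(?w$0)"
          by (rule sum_only0) (use im0 in auto)
        moreover have "x$i = (if i=0 then 0 else Re(?w$i)) - (\<Sum>j<n+1. A$$(i,j)*Im(?w$j))"
          using k i by blast
        moreover have "(if i=0 then 0 else Re(?w$i)) = 0" using re0 i by simp
        ultimately have "x$i = - (A$$(i,0) * Im(?w$0))" by linarith
        then show "x $ i = ((- Im (?w$0)) \<cdot>\<^sub>v col A 0) $ i" using i A by simp
      qed (use x A in auto)
      then show "x \<in> {c \<cdot>\<^sub>v col A 0 | c. True}" by blast
    next
      fix x assume "x \<in> {c \<cdot>\<^sub>v col A 0 | c. True}"
      then obtain c where xc: "x = c \<cdot>\<^sub>v col A 0" by blast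
      have x: "x \<in> carrier_vec (n+1)" using xc colc by simp
      define w' where "w' = vec (n+1) (\<lambda>i. if i=0 then - \<i> * complex_of_real c else 0)"
      have w'c: "w' \<in> carrier_vec (n+1)" unfolding w'_def by simp
      have Bw': "?B *\<^sub>v w' = map_vec complex_of_real x"
      proof (intro eq_vecI)
        fix i assume "i < dim_vec (map_vec complex_of_real x)"
        then have i: "i < n+1" using x by simp
        have s1: "(\<Sum>j<n+1. A$$(i,j)*Im(w'$j)) = A$$(i,0) * (-c)"
          by (subst sum_only0) (auto simp: w'_def)
        have s2: "(\<Sum>j<n+1. A$$(i,j)*Re(w'$j)) = 0"
          by (rule sum.neutral) (auto simp: w'_def)
        show "(?B *\<^sub>v w') $ i = map_vec complex_of_real x $ i"
        proof (rule complex_eqI)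
          show "Re ((?B *\<^sub>v w') $ i) = Re (map_vec complex_of_real x $ i)"
            unfolding B_apply(1)[OF A w'c i] s1 using i x A by (simp add: xc w'_def)
          show "Im ((?B *\<^sub>v w') $ i) = Im (map_vec complex_of_real x $ i)"
            unfolding B_apply(2)[OF A w'c i] s2 using i x A by (simp add: xc w'_def)
        qed
      qed (use Bc x in simp)
      have "C *\<^sub>v map_vec complex_of_real x = w'"
        unfolding Bw'[symmetric] using C Bc w'c CB by (simp add: assoc_mult_mat_vec[symmetric])
      then have "?R *\<^sub>v x = 0\<^sub>v (n+1)" unfolding Rx[OF x]
        by (intro eq_vecI) (auto simp: w'_def)
      then show "x \<in> mat_kernel ?R" using x Rc by (auto simp: mat_kernel_def)
    qed
    have ord: "order 0 (char_poly ?R) = 1"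
    proof -
      let ?M = "map_mat complex_of_real ?R"
      let ?a = "map_vec complex_of_real (col A 0)"
      have Mc: "?M \<in> carrier_mat (n+1) (n+1)" using Rc by simp
      have colnz: "col A 0 \<noteq> 0\<^sub>v (n+1)"
      proof
        assume "col A 0 = 0\<^sub>v (n+1)"
        then have "col A 0 $ j0 = 0" using j0N by simp
        then show False using Aj0 j0N A by simp
      qed
      have "col A 0 = 1 \<cdot>\<^sub>v col A 0" by simp
      then have colker: "col A 0 \<in> mat_kernel ?R" using ker by blast
      have Rcol: "?R *\<^sub>v col A 0 = 0\<^sub>v (n+1)" using colker Rc by (auto simp: mat_kernel_def)
      have z0: "0 \<cdot>\<^sub>v col A 0 = 0\<^sub>v (n+1)" using A by (intro eq_vecI) auto
      have "eigenvalue ?R 0" unfolding eigenvalue_def eigenvector_def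
        using colc colnz Rcol Rc z0 by (intro exI[of _ "col A 0"]) auto
      then have "poly (char_poly ?R) 0 = 0" using eigenvalue_root_char_poly[OF Rc] by simp
      moreover have "char_poly ?R \<noteq> 0" using degree_monic_char_poly[OF Rc] by auto
      ultimately have ge: "order 0 (char_poly ?R) \<noteq> 0" by (simp add: order_root)
      have oM: "order 0 (char_poly ?M) = order 0 (char_poly ?R)"
        unfolding of_real_hom.char_poly_hom[OF Rc] by (rule oh_order)
      have realker: "\<exists>c. y = c \<cdot>\<^sub>v col A 0" if "y \<in> carrier_vec (n+1)" "?R *\<^sub>v y = 0\<^sub>v (n+1)" for y
      proof -
        have "y \<in> mat_kernel ?R" using that Rc by (auto simp: mat_kernel_def)
        then show ?thesis using ker by blast
      qed
      have rr: "?R *\<^sub>v y = 0\<^sub>v (n+1)" if y: "y \<in> carrier_vec (n+1)" and e: "?R *\<^sub>v (?R *\<^sub>v y) = 0\<^sub>v (n+1)" for y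
      proof -
        have Ryc: "?R *\<^sub>v y \<in> carrier_vec (n+1)" using Rc y by simp
        have "(?R *\<^sub>v y) \<bullet> (?R *\<^sub>v y) = (transpose_mat ?R *\<^sub>v y) \<bullet> (?R *\<^sub>v y)" using tR by simp
        also have "\<dots> = y \<bullet> (?R *\<^sub>v (?R *\<^sub>v y))" by (rule transpose_vec_mult_scalar[OF Rc Ryc y])
        also have "\<dots> = 0" using e y by simp
        finally show ?thesis using self_scalar_zero[OF Ryc] by simp
      qed
      have Mz: "?M *\<^sub>v z = 0\<^sub>v (n+1)" if z: "z \<in> carrier_vec (n+1)"
        and re: "?R *\<^sub>v map_vec Re z = 0\<^sub>v (n+1)" and im: "?R *\<^sub>v map_vec Im z = 0\<^sub>v (n+1)" for z
      proof (intro eq_vecI)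
        fix i assume i: "i < dim_vec (0\<^sub>v (n+1) :: complex vec)"
        have "map_vec Re (?M *\<^sub>v z) $ i = 0" "map_vec Im (?M *\<^sub>v z) $ i = 0"
          using M_apply[OF Rc z] re im i by simp_all
        then show "(?M *\<^sub>v z) $ i = 0\<^sub>v (n+1) $ i" using i Mc by (auto intro: complex_eqI)
      qed (use Mc in simp)
      have ReMz: "?R *\<^sub>v map_vec Re z = 0\<^sub>v (n+1) \<and> ?R *\<^sub>v map_vec Im z = 0\<^sub>v (n+1)"
        if z: "z \<in> carrier_vec (n+1)" and e: "?M *\<^sub>v z = 0\<^sub>v (n+1)" for z
        using M_apply[OF Rc z] e by auto
      have kerM: "mat_kernel ?M \<subseteq> {c \<cdot>\<^sub>v ?a | c. True}"
      proof
        fix z assume "z \<in> mat_kernel ?M"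
        then have z: "z \<in> carrier_vec (n+1)" and Mz0: "?M *\<^sub>v z = 0\<^sub>v (n+1)"
          using Mc by (auto simp: mat_kernel_def)
        have zr: "map_vec Re z \<in> carrier_vec (n+1)" "map_vec Im z \<in> carrier_vec (n+1)" using z by simp_all
        obtain c1 where c1: "map_vec Re z = c1 \<cdot>\<^sub>v col A 0"
          using realker[OF zr(1)] ReMz[OF z Mz0] by blast
        obtain c2 where c2: "map_vec Im z = c2 \<cdot>\<^sub>v col A 0"
          using realker[OF zr(2)] ReMz[OF z Mz0] by blast
        have "z = (complex_of_real c1 + \<i> * complex_of_real c2) \<cdot>\<^sub>v ?a"
        proof (intro eq_vecI)
          fix i assume "i < dim_vec ((complex_of_real c1 + \<i> * complex_of_real c2) \<cdot>\<^sub>v ?a)"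
          then have i: "i < n+1" using A by simp
          have "map_vec Re z $ i = (c1 \<cdot>\<^sub>v col A 0) $ i" "map_vec Im z $ i = (c2 \<cdot>\<^sub>v col A 0) $ i"
            using c1 c2 by simp_all
          then show "z $ i = ((complex_of_real c1 + \<i> * complex_of_real c2) \<cdot>\<^sub>v ?a) $ i"
            using i z A by (auto intro!: complex_eqI)
        qed (use z A in simp)
        then show "z \<in> {c \<cdot>\<^sub>v ?a | c. True}" by blast
      qed
      have ker2: "mat_kernel (?M * ?M) = mat_kernel ?M"
      proof (intro equalityI subsetI)
        fix z assume "z \<in> mat_kernel (?M * ?M)"
        then have z: "z \<in> carrier_vec (n+1)" and e: "(?M * ?M) *\<^sub>v z = 0\<^sub>v (n+1)"
          using Mc by (auto simp: mat_kernel_def)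
        have Mzc: "?M *\<^sub>v z \<in> carrier_vec (n+1)" using Mc z by simp
        have e2: "?M *\<^sub>v (?M *\<^sub>v z) = 0\<^sub>v (n+1)" using e Mc z by simp
        from ReMz[OF Mzc e2] have "?R *\<^sub>v (?R *\<^sub>v map_vec Re z) = 0\<^sub>v (n+1)"
          "?R *\<^sub>v (?R *\<^sub>v map_vec Im z) = 0\<^sub>v (n+1)"
          using M_apply[OF Rc z] by auto
        then have "?R *\<^sub>v map_vec Re z = 0\<^sub>v (n+1)" "?R *\<^sub>v map_vec Im z = 0\<^sub>v (n+1)"
          using rr[of "map_vec Re z"] rr[of "map_vec Im z"] z by simp_all
        then show "z \<in> mat_kernel ?M" using Mz[OF z] z Mc by (auto simp: mat_kernel_def)
      next
        fix z assume "z \<in> mat_kernel ?M"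
        then have z: "z \<in> carrier_vec (n+1)" and e: "?M *\<^sub>v z = 0\<^sub>v (n+1)"
          using Mc by (auto simp: mat_kernel_def)
        have "(?M * ?M) *\<^sub>v z = ?M *\<^sub>v (?M *\<^sub>v z)" using Mc z by simp
        also have "\<dots> = ?M *\<^sub>v 0\<^sub>v (n+1)" using e by simp
        also have "\<dots> = 0\<^sub>v (n+1)" using Mc by (intro eq_vecI) auto
        finally have "(?M * ?M) *\<^sub>v z = 0\<^sub>v (n+1)" .
        then show "z \<in> mat_kernel (?M * ?M)" using z Mc by (auto simp: mat_kernel_def)
      qed
      have dimle: "kernel_dim ?M \<le> 1"
      proof -
        interpret K: kernel "n+1" "n+1" ?M by unfold_locales (rule Mc)
        have ac: "?a \<in> carrier_vec (n+1)" using colc by simp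
        have aker: "?a \<in> mat_kernel ?M"
        proof -
          have "map_vec Re ?a = col A 0" "map_vec Im ?a = 0\<^sub>v (n+1)" using A
            by (auto intro!: eq_vecI)
          moreover have "?R *\<^sub>v 0\<^sub>v (n+1) = 0\<^sub>v (n+1)" using Rc by (intro eq_vecI) auto
          ultimately have "?M *\<^sub>v ?a = 0\<^sub>v (n+1)" using Mz[OF ac] Rcol Rc by simp
          then show ?thesis using ac Mc by (auto simp: mat_kernel_def)
        qed
        have gen: "K.Ker.span {?a} = mat_kernel ?M"
        proof (intro equalityI subsetI)
          fix z assume "z \<in> K.Ker.span {?a}"
          then show "z \<in> mat_kernel ?M" using K.Ker.span_closed[of "{?a}"] aker by auto
        next
          fix z assume "z \<in> mat_kernel ?M"
          with kerM obtain c where zc: "z = c \<cdot>\<^sub>v ?a" by blast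
          have sub: "submodule class_ring (K.Ker.span {?a}) K.VK"
            by (rule K.Ker.span_is_submodule) (use aker in auto)
          have "?a \<in> K.Ker.span {?a}" by (rule K.Ker.span_self) (use aker in auto)
          from submodule.smult_closed[OF sub _ this, of c] show "z \<in> K.Ker.span {?a}"
            unfolding zc by (simp add: module_vec_simps)
        qed
        have "K.Ker.dim \<le> 1" by (rule K.Ker.dim_le1I) (use gen aker in auto)
        then show ?thesis by simp
      qed
      obtain as where "char_poly ?M = (\<Prod>a\<leftarrow>as. [:-a,1:])" using char_poly_factorized[OF Mc] by auto
      from jordan_nf_exists[OF Mc this] obtain n_as where jnf: "jordan_nf ?M n_as" by auto
      define L where "L = map fst (filter (\<lambda>na. snd na = 0) n_as)"
      have pos: "\<forall>x\<in>set L. 0 < x" using jnf unfolding jordan_nf_def L_def by force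
      have o: "order 0 (char_poly ?M) = sum_list L" using jordan_nf_order[OF jnf] L_def by simp
      have d: "dim_gen_eigenspace ?M 0 k = sum_list (map (min k) L)" for k
      proof -
        have "map fst [(n, e)\<leftarrow>n_as . e = 0] = L" unfolding L_def by (induct n_as) auto
        then show ?thesis using dim_gen_eigenspace[OF jnf, of 0 k] by simp
      qed
      have cm: "char_matrix ?M 0 = ?M" using Mc by (intro eq_matI) (auto simp: char_matrix_def)
      have d1: "dim_gen_eigenspace ?M 0 1 = kernel_dim ?M"
        using Mc by (simp add: dim_gen_eigenspace_def cm)
      have "?M ^\<^sub>m 2 = ?M * ?M" using Mc by (simp add: numeral_2_eq_2)
      then have d2: "dim_gen_eigenspace ?M 0 2 = kernel_dim ?M"
        unfolding dim_gen_eigenspace_def cm using kernel_dim_cong[OF ker2] Mc by simp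
      from d[of 1] d[of 2] d1 d2 have "sum_list (map (min 1) L) = sum_list (map (min 2) L)" by simp
      from min12[OF pos this] have "sum_list L = sum_list (map (min 1) L)" .
      with o d[of 1] d1 dimle have "order 0 (char_poly ?M) \<le> 1" by simp
      with ge oM show ?thesis by simp
    qed
    show ?thesis using psd ker ord by blast
  qed
  show ?thesis using inv part2 by blast
qed


end
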